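(* Let $D$ be a unique factorization domain and let $a$ be a nonzero element of $D$. Then the congruence $P_{J([a]_\sim)}$ on the semigroup $D'=D_{mult}/\sim$ has finite index, and $d(a)=|D'/P_{J([a]_\sim)}|$.
   Context: $D_{mult}$ is the multiplicative semigroup of $D$; $\sim$ is the associate relation, a congruence on $D_{mult}$; $D'=D_{mult}/\sim$ and $[x]_\sim$ denotes the $\sim$-class of $x$. $J([a]_\sim)$ is the ideal of the semigroup $D'$ generated by $[a]_\sim$. For a semigroup $S$, $H\subseteq S$, $a\in S$: $H\dots a=\{(x,y)\in S\times S: xay\in H\}$ and $P_H=\{(a,b)\in S\times S: H\dots a=H\dots b\}$ (computed here in $S=D'$). $d(a)$ is the number of pairwise non-associated divisors of $a$ in $D$ (equivalently, the number of distinct divisors of $[a]_\sim$ in $D'$). *)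

theory Defs
  imports "HOL-Computational_Algebra.Factorial_Ring"
begin

definition assoc_class :: "'a::comm_monoid_mult \<Rightarrow> 'a set" where
  "assoc_class x = {y. x dvd y \<and> y dvd x}"

definition Dprime :: "'a::comm_monoid_mult set set" where
  "Dprime = range assoc_class"

definition Dprime_mult :: "'a::comm_monoid_mult set \<Rightarrow> 'a set \<Rightarrow> 'a set" where
  "Dprime_mult A B = assoc_class ((SOME x. x \<in> A) * (SOME y. y \<in> B))"

(* ideal of a semigroup (S, f) generated by c:  S^1 c S^1 *)
definition sg_ideal_gen :: "'s set \<Rightarrow> ('s \<Rightarrow> 's \<Rightarrow> 's) \<Rightarrow> 's \<Rightarrow> 's set" where
  "sg_ideal_gen S f c = {c} \<union> {f x c | x. x \<in> S} \<union> {f c y | y. y \<in> S}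
                         \<union> {f (f x c) y | x y. x \<in> S \<and> y \<in> S}"

definition sg_res :: "'s set \<Rightarrow> ('s \<Rightarrow> 's \<Rightarrow> 's) \<Rightarrow> 's set \<Rightarrow> 's \<Rightarrow> ('s \<times> 's) set" where
  "sg_res S f H a = {(x, y). x \<in> S \<and> y \<in> S \<and> f (f x a) y \<in> H}"

definition sg_P :: "'s set \<Rightarrow> ('s \<Rightarrow> 's \<Rightarrow> 's) \<Rightarrow> 's set \<Rightarrow> ('s \<times> 's) set" where
  "sg_P S f H = {(a, b). a \<in> S \<and> b \<in> S \<and> sg_res S f H a = sg_res S f H b}"

definition num_divs :: "'a::comm_monoid_mult \<Rightarrow> nat" where
  "num_divs a = card (assoc_class ` {d. d dvd a})"

end

theory Submission imports Defs begin

lemma fin_submsets: "finite {N. N \<subseteq># (M::'b multiset)}"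
proof -
  have "{N. N \<subseteq># M} \<subseteq> mset ` {ys. set ys \<subseteq> set_mset M \<and> length ys \<le> size M}"
  proof
    fix N assume "N \<in> {N. N \<subseteq># M}"
    then have N: "N \<subseteq># M" by simp
    obtain ys where ys: "mset ys = N" using ex_mset by blast
    have "set ys \<subseteq> set_mset M" using N ys by (metis mset_subset_eqD set_mset_mset subsetI)
    moreover have "length ys \<le> size M" using N ys size_mset_mono by fastforce
    ultimately show "N \<in> mset ` {ys. set ys \<subseteq> set_mset M \<and> length ys \<le> size M}" using ys by blast
  qed
  moreover have "finite {ys. set ys \<subseteq> set_mset M \<and> length ys \<le> size M}"
    by (rule finite_lists_length_le) simp
  ultimately show ?thesis using finite_subset by blast
qed

lemma card_image_kernel:
  assumes "\<And>x y. x \<in> D \<Longrightarrow> y \<in> D \<Longrightarrow> f x = f y \<longleftrightarrow> g x = g y"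
  shows "card (f ` D) = card (g ` D)"
proof -
  define h where "h = (\<lambda>v. g (inv_into D f v))"
  have "g ` D = h ` (f ` D)"
    unfolding h_def image_image
    by (rule image_cong[OF refl]) (metis assms f_inv_into_f image_eqI inv_into_into)
  moreover have "inj_on h (f ` D)"
    unfolding h_def inj_on_def
    by (metis (no_types, lifting) assms f_inv_into_f inv_into_into)
  ultimately show ?thesis by (simp add: card_image)
qed

lemma quotient_kernel:
  "D // {(x,y). x \<in> D \<and> y \<in> D \<and> f x = f y} = (\<lambda>v. {x\<in>D. f x = v}) ` (f ` D)"
proof -
  have "\<And>x. x \<in> D \<Longrightarrow> {y \<in> D. f x = f y} = {y\<in>D. f y = f x}" by auto
  then show ?thesis unfolding quotient_def by (auto simp: image_iff)
qed

lemma card_quotient_kernel: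
  assumes "finite (f ` D)"
  shows "finite (D // {(x,y). x \<in> D \<and> y \<in> D \<and> f x = f y}) \<and>
         card (D // {(x,y). x \<in> D \<and> y \<in> D \<and> f x = f y}) = card (f ` D)"
proof -
  have "inj_on (\<lambda>v. {x\<in>D. f x = v}) (f ` D)"
    unfolding inj_on_def by blast
  then show ?thesis using assms unfolding quotient_kernel by (simp add: card_image)
qed

lemma assoc_class_eq: "assoc_class x = assoc_class y \<longleftrightarrow> x dvd y \<and> y dvd x"
  unfolding assoc_class_def by (auto intro: dvd_trans)

lemma assoc_class_mem: "y \<in> assoc_class x \<longleftrightarrow> x dvd y \<and> y dvd x"
  unfolding assoc_class_def by auto

lemma rep_assoc: "(SOME y. y \<in> assoc_class x) \<in> assoc_class x"
  by (rule someI[of _ x]) (simp add: assoc_class_mem)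

lemma mult_class: "Dprime_mult (assoc_class x) (assoc_class y) = assoc_class (x * y)"
proof -
  let ?x = "SOME u. u \<in> assoc_class x" and ?y = "SOME u. u \<in> assoc_class y"
  have "x dvd ?x" "?x dvd x" "y dvd ?y" "?y dvd y" using rep_assoc[of x] rep_assoc[of y]
    by (auto simp: assoc_class_mem)
  then show ?thesis unfolding Dprime_mult_def assoc_class_eq by (auto intro: mult_dvd_mono)
qed

definition psi :: "'a::{factorial_semiring,idom} \<Rightarrow> 'a \<Rightarrow> 'a multiset" where
  "psi a b = (if b = 0 then {#} else prime_factorization a - prime_factorization b)"

lemma psi_char:
  fixes a b x :: "'a::{factorial_semiring,idom}"
  assumes "a \<noteq> 0"
  shows "a dvd x * b \<longleftrightarrow> x = 0 \<or> psi a b \<subseteq># prime_factorization x"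
proof (cases "x = 0 \<or> b = 0")
  case True then show ?thesis by (auto simp: psi_def)
next
  case False
  then have "a dvd x * b \<longleftrightarrow> prime_factorization a \<subseteq># prime_factorization x + prime_factorization b"
    using assms by (simp add: prime_factorization_subset_iff_dvd[symmetric] prime_factorization_mult)
  also have "\<dots> \<longleftrightarrow> psi a b \<subseteq># prime_factorization x"
    using False by (simp add: psi_def subset_eq_diff_conv)
  finally show ?thesis using False by simp
qed

lemma psi_sub: "psi a b \<subseteq># prime_factorization a"
  by (simp add: psi_def)

lemma prod_sub:
  fixes a :: "'a::{factorial_semiring,idom}"
  assumes "N \<subseteq># prime_factorization a"
  shows "prod_mset N \<noteq> 0 \<and> prime_factorization (prod_mset N) = N"
proof -
  have pr: "\<And>p. p \<in># N \<Longrightarrow> prime p" using assms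
    by (meson in_prime_factors_imp_prime mset_subset_eqD)
  then have "prod_mset N \<noteq> 0" by (metis not_prime_0 prod_mset_zero_iff)
  then show ?thesis using prime_factorization_prod_mset_primes[OF pr] by simp
qed

lemma psi_eq:
  fixes a b c :: "'a::{factorial_semiring,idom}"
  assumes "a \<noteq> 0"
  shows "(\<forall>x. a dvd x * b \<longleftrightarrow> a dvd x * c) \<longleftrightarrow> psi a b = psi a c"
proof
  assume H: "\<forall>x. a dvd x * b \<longleftrightarrow> a dvd x * c"
  have 1: "psi a c \<subseteq># psi a b"
    using H[rule_format, of "prod_mset (psi a b)"] prod_sub[OF psi_sub[of a b]] psi_char[OF assms]
    by (metis subset_mset.order_refl)
  have 2: "psi a b \<subseteq># psi a c"
    using H[rule_format, of "prod_mset (psi a c)"] prod_sub[OF psi_sub[of a c]] psi_char[OF assms]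
    by (metis subset_mset.order_refl)
  from 1 2 show "psi a b = psi a c" by (rule subset_mset.antisym[rotated])
next
  assume "psi a b = psi a c"
  then show "\<forall>x. a dvd x * b \<longleftrightarrow> a dvd x * c" using psi_char[OF assms] by metis
qed

lemma psi_assoc:
  fixes a b c :: "'a::{factorial_semiring,idom}"
  assumes "a \<noteq> 0" "b dvd c" "c dvd b"
  shows "psi a b = psi a c"
proof -
  have "\<forall>x. a dvd x * b \<longleftrightarrow> a dvd x * c"
    using assms by (meson dvd_trans mult_dvd_mono dvd_refl)
  then show ?thesis using psi_eq[OF assms(1)] by blast
qed

lemma psi_range:
  fixes a :: "'a::{factorial_semiring,idom}"
  assumes "a \<noteq> 0"
  shows "range (psi a) = {N. N \<subseteq># prime_factorization a}"
proof
  show "range (psi a) \<subseteq> {N. N \<subseteq># prime_factorization a}" using psi_sub by blast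
next
  show "{N. N \<subseteq># prime_factorization a} \<subseteq> range (psi a)"
  proof
    fix N assume "N \<in> {N. N \<subseteq># prime_factorization a}"
    then have N: "N \<subseteq># prime_factorization a" by simp
    have "prime_factorization a - N \<subseteq># prime_factorization a" by simp
    from prod_sub[OF this] have "psi a (prod_mset (prime_factorization a - N)) = N"
      using N by (simp add: psi_def subset_mset.diff_diff_right)
    then show "N \<in> range (psi a)" by (metis rangeI)
  qed
qed

lemma num_divs_eq:
  fixes a :: "'a::{factorial_semiring,idom}"
  assumes "a \<noteq> 0"
  shows "num_divs a = card {N. N \<subseteq># prime_factorization a}"
proof -
  have "card (assoc_class ` {d. d dvd a}) = card (prime_factorization ` {d. d dvd a})"
  proof (rule card_image_kernel)
    fix x y assume "x \<in> {d. d dvd a}" "y \<in> {d. d dvd a}"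
    then have "x \<noteq> 0" "y \<noteq> 0" using assms by auto
    then show "assoc_class x = assoc_class y \<longleftrightarrow> prime_factorization x = prime_factorization y"
      by (metis assoc_class_eq prime_factorization_subset_iff_dvd subset_mset.antisym subset_mset.order_refl)
  qed
  moreover have "prime_factorization ` {d. d dvd a} = {N. N \<subseteq># prime_factorization a}"
  proof
    show "prime_factorization ` {d. d dvd a} \<subseteq> {N. N \<subseteq># prime_factorization a}"
      using assms by (auto simp: prime_factorization_subset_iff_dvd)
  next
    show "{N. N \<subseteq># prime_factorization a} \<subseteq> prime_factorization ` {d. d dvd a}"
    proof
      fix N assume "N \<in> {N. N \<subseteq># prime_factorization a}"
      then have N: "N \<subseteq># prime_factorization a" by simp
      from prod_sub[OF N] have "prod_mset N dvd a"
        using assms N by (metis prime_factorization_subset_iff_dvd)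
      then show "N \<in> prime_factorization ` {d. d dvd a}" using prod_sub[OF N] by force
    qed
  qed
  ultimately show ?thesis unfolding num_divs_def by simp
qed

lemma Dprime_E: "A \<in> Dprime \<Longrightarrow> \<exists>x. A = assoc_class x"
  unfolding Dprime_def by auto

lemma cls_Dprime[simp]: "assoc_class x \<in> Dprime"
  unfolding Dprime_def by auto

lemma H_mem:
  fixes a z :: "'a::{factorial_semiring,idom}"
  shows "assoc_class z \<in> sg_ideal_gen Dprime Dprime_mult (assoc_class a) \<longleftrightarrow> a dvd z"
proof
  assume "a dvd z"
  then obtain w where "z = a * w" by (auto elim: dvdE)
  then have e: "assoc_class z = Dprime_mult (assoc_class a) (assoc_class w)" by (simp add: mult_class)
  have "assoc_class z \<in> {Dprime_mult (assoc_class a) y |y. y \<in> Dprime}"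
    unfolding e by (intro CollectI exI[of _ "assoc_class w"] conjI refl cls_Dprime)
  then show "assoc_class z \<in> sg_ideal_gen Dprime Dprime_mult (assoc_class a)"
    unfolding sg_ideal_gen_def by (intro UnI1 UnI2)
next
  assume "assoc_class z \<in> sg_ideal_gen Dprime Dprime_mult (assoc_class a)"
  then have "\<exists>t. assoc_class z = assoc_class t \<and> a dvd t"
    unfolding sg_ideal_gen_def
  proof (elim UnE)
    assume "assoc_class z \<in> {assoc_class a}" then show ?thesis by auto
  next
    assume "assoc_class z \<in> {Dprime_mult x (assoc_class a) |x. x \<in> Dprime}"
    then obtain u where "assoc_class z = Dprime_mult (assoc_class u) (assoc_class a)"
      by (auto dest!: Dprime_E)
    then show ?thesis by (metis mult_class dvd_triv_right)
  next
    assume "assoc_class z \<in> {Dprime_mult (assoc_class a) y |y. y \<in> Dprime}"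
    then obtain u where "assoc_class z = Dprime_mult (assoc_class a) (assoc_class u)"
      by (auto dest!: Dprime_E)
    then show ?thesis by (metis mult_class dvd_triv_left)
  next
    assume "assoc_class z \<in> {Dprime_mult (Dprime_mult x (assoc_class a)) y |x y. x \<in> Dprime \<and> y \<in> Dprime}"
    then obtain u v where "assoc_class z = Dprime_mult (Dprime_mult (assoc_class u) (assoc_class a)) (assoc_class v)"
      by (auto dest!: Dprime_E)
    then show ?thesis by (metis mult_class dvd_triv_right dvd_mult2)
  qed
  then show "a dvd z" by (auto simp: assoc_class_eq intro: dvd_trans)
qed

lemma res_mem:
  fixes a b u v :: "'a::{factorial_semiring,idom}"
  shows "(assoc_class u, assoc_class v) \<in> sg_res Dprime Dprime_mult (sg_ideal_gen Dprime Dprime_mult (assoc_class a)) (assoc_class b)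
     \<longleftrightarrow> a dvd u * b * v"
  unfolding sg_res_def by (simp add: mult_class H_mem)

lemma res_eq:
  fixes a b c :: "'a::{factorial_semiring,idom}"
  shows "sg_res Dprime Dprime_mult (sg_ideal_gen Dprime Dprime_mult (assoc_class a)) (assoc_class b) =
         sg_res Dprime Dprime_mult (sg_ideal_gen Dprime Dprime_mult (assoc_class a)) (assoc_class c)
     \<longleftrightarrow> (\<forall>x. a dvd x * b \<longleftrightarrow> a dvd x * c)"
  (is "?R b = ?R c \<longleftrightarrow> _")
proof
  assume "?R b = ?R c"
  then have "\<And>x. a dvd x * b * 1 \<longleftrightarrow> a dvd x * c * 1"
    using res_mem[of _ 1 a b] res_mem[of _ 1 a c] by simp
  then show "\<forall>x. a dvd x * b \<longleftrightarrow> a dvd x * c" by simp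
next
  assume H: "\<forall>x. a dvd x * b \<longleftrightarrow> a dvd x * c"
  have K: "\<And>u v. a dvd u * b * v \<longleftrightarrow> a dvd u * c * v"
    using H[rule_format, of "u * v" for u v] by (simp add: ac_simps)
  have sub: "?R b \<subseteq> Dprime \<times> Dprime" "?R c \<subseteq> Dprime \<times> Dprime"
    unfolding sg_res_def by auto
  show "?R b = ?R c"
  proof (rule set_eqI)
    fix p show "p \<in> ?R b \<longleftrightarrow> p \<in> ?R c"
    proof (cases "p \<in> Dprime \<times> Dprime")
      case True
      then obtain u v where "p = (assoc_class u, assoc_class v)" by (auto dest!: Dprime_E)
      then show ?thesis using K[of u v] res_mem[of u v a b] res_mem[of u v a c] by simp
    next
      case False then show ?thesis using sub by blast
    qed
  qed
qed

lemma kappa: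
  fixes a b :: "'a::{factorial_semiring,idom}"
  assumes "a \<noteq> 0"
  shows "psi a (SOME x. x \<in> assoc_class b) = psi a b"
  using rep_assoc[of b] psi_assoc[OF assms] by (simp add: assoc_class_mem)

theorem theorem4:
  fixes a :: "'a :: {factorial_semiring, idom}"
  assumes "a \<noteq> 0"
  shows "finite (Dprime // sg_P Dprime Dprime_mult (sg_ideal_gen Dprime Dprime_mult (assoc_class a)))
         \<and> num_divs a = card (Dprime // sg_P Dprime Dprime_mult (sg_ideal_gen Dprime Dprime_mult (assoc_class a)))"
proof -
  define k where "k = (\<lambda>A::'a set. psi a (SOME x. x \<in> A))"
  have P: "sg_P Dprime Dprime_mult (sg_ideal_gen Dprime Dprime_mult (assoc_class a))
        = {(A,B). A \<in> Dprime \<and> B \<in> Dprime \<and> k A = k B}"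
  proof (rule set_eqI, clarify)
    fix A B :: "'a set"
    show "(A, B) \<in> sg_P Dprime Dprime_mult (sg_ideal_gen Dprime Dprime_mult (assoc_class a))
        \<longleftrightarrow> (A, B) \<in> {(A,B). A \<in> Dprime \<and> B \<in> Dprime \<and> k A = k B}"
    proof (cases "A \<in> Dprime \<and> B \<in> Dprime")
      case True
      then obtain b c where bc: "A = assoc_class b" "B = assoc_class c" by (auto dest!: Dprime_E)
      show ?thesis
        unfolding sg_P_def bc using res_eq[of a b c] psi_eq[OF assms, of b c]
        by (simp add: k_def kappa[OF assms])
    next
      case False then show ?thesis unfolding sg_P_def by auto
    qed
  qed
  have img: "k ` Dprime = {N. N \<subseteq># prime_factorization a}"
  proof -
    have "k ` Dprime = range (psi a)"
    proof
      show "k ` Dprime \<subseteq> range (psi a)" unfolding k_def by auto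
      show "range (psi a) \<subseteq> k ` Dprime"
      proof
        fix N assume "N \<in> range (psi a)"
        then obtain b where "N = psi a b" by auto
        then have "N = k (assoc_class b)" by (simp add: k_def kappa[OF assms])
        then show "N \<in> k ` Dprime" using cls_Dprime by blast
      qed
    qed
    then show ?thesis using psi_range[OF assms] by simp
  qed
  have fin: "finite (k ` Dprime)" unfolding img by (rule fin_submsets)
  show ?thesis
    unfolding P using card_quotient_kernel[OF fin] num_divs_eq[OF assms] img by simp
qed

end
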